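(* Suppose $\mathcal F\subset\binom{[n]}{4}$ satisfies $\gamma_3(\mathcal F)\geq 3$ and $|F\cap F'|=1$ for all distinct $F,F'\in\mathcal F$. Then $\mathcal F$ is isomorphic to $\mathcal L_3$.
   Context: For $S\subset[n]$, $\mathcal F(\overline S)=\{F\in\mathcal F: F\cap S=\emptyset\}$, and $\gamma_3(\mathcal F)=\min_{S\in\binom{[n]}{3}}|\mathcal F(\overline S)|$. $\mathcal L_3$ is the family of lines of the projective plane of order 3: on the vertex set $\mathbb Z_{13}$, $\mathcal L_3=\{\{i,i+1,i+3,i+9\}: i\in\mathbb Z_{13}\}$ (addition modulo 13). Isomorphic means equal up to an injective relabeling of vertices. *)

theory Defs
  imports Main
begin

definition avoid :: "nat set set \<Rightarrow> nat set \<Rightarrow> nat set set" where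
  "avoid F S = {A \<in> F. A \<inter> S = {}}"

definition gamma3 :: "nat \<Rightarrow> nat set set \<Rightarrow> nat" where
  "gamma3 n F = Min {card (avoid F S) | S. S \<subseteq> {1..n} \<and> card S = 3}"

text \<open>Lines of the projective plane of order 3 on Z_13 = {0..12}.\<close>
definition L3 :: "nat set set" where
  "L3 = {{i, (i+1) mod 13, (i+3) mod 13, (i+9) mod 13} | i. i < 13}"

definition isomorphic :: "'a set set \<Rightarrow> 'b set set \<Rightarrow> bool" where
  "isomorphic F G = (\<exists>\<phi>. inj_on \<phi> (\<Union>F) \<and> (\<lambda>A. \<phi> ` A) ` F = G)"

end

theory Submission
  imports Defs
begin


lemma R1:
  assumes c4: "\<forall>A\<in>F. card A = 4" and lin: "\<forall>A\<in>F. \<forall>B\<in>F. A \<noteq> B \<longrightarrow> card (A \<inter> B) = 1"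
  and "L\<in>F" "M\<in>F" "x\<in>L" "y\<in>L" "x\<in>M" "y\<in>M" "x\<noteq>y"
  shows "L = M"
proof (rule ccontr)
  assume "L \<noteq> M"
  hence c1: "card (L\<inter>M) = 1" using lin assms(3,4) by blast
  have "card L = 4" using c4 assms(3) by blast
  hence fL: "finite L" by (intro card_ge_0_finite) simp
  have "card {x,y} \<le> card (L\<inter>M)" by (rule card_mono) (use fL assms(5-8) in auto)
  thus False using assms(9) c1 by simp
qed

lemma meet:
  assumes lin: "\<forall>A\<in>F. \<forall>B\<in>F. A \<noteq> B \<longrightarrow> card (A \<inter> B) = 1"
  and "L\<in>F" "M\<in>F" "L\<noteq>M"
  shows "\<exists>z. z\<in>L \<and> z\<in>M"
proof -
  have "card (L\<inter>M) = 1" using lin assms by auto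
  then obtain z where "L\<inter>M = {z}" using card_1_singleton_iff by (metis One_nat_def)
  thus ?thesis by auto
qed

lemma deg4:
  assumes c4: "\<forall>A\<in>F. card A = 4" and lin: "\<forall>A\<in>F. \<forall>B\<in>F. A \<noteq> B \<longrightarrow> card (A \<inter> B) = 1"
  and G: "\<And>S. S \<subseteq> {1..n} \<Longrightarrow> card S = 3 \<Longrightarrow> 3 \<le> card (avoid F S)"
  and sub: "\<forall>A\<in>F. A \<subseteq> {1..n}"
  and A: "A\<in>F" "x\<in>A"
  shows "\<exists>B1 B2 B3. B1\<in>F \<and> B2\<in>F \<and> B3\<in>F \<and> x\<in>B1 \<and> x\<in>B2 \<and> x\<in>B3 \<and>
     A\<noteq>B1 \<and> A\<noteq>B2 \<and> A\<noteq>B3 \<and> B1\<noteq>B2 \<and> B1\<noteq>B3 \<and> B2\<noteq>B3"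
proof -
  define S where "S = A - {x}"
  have fA: "finite A" using c4 A(1) by (intro card_ge_0_finite) simp
  have cS: "card S = 3" using c4 A fA unfolding S_def by (simp add: card_Diff_singleton)
  have "S \<subseteq> {1..n}" using sub A unfolding S_def by auto
  hence "3 \<le> card (avoid F S)" using G cS by auto
  then obtain T where T: "T \<subseteq> avoid F S" "card T = 3" by (metis obtain_subset_with_card_n)
  then obtain B1 B2 B3 where T3: "T = {B1,B2,B3}" "B1\<noteq>B2" "B2\<noteq>B3" "B1\<noteq>B3" by (auto simp: card_3_iff)
  have key: "B\<in>F \<and> x\<in>B \<and> A\<noteq>B" if "B \<in> avoid F S" for B
  proof -
    have B: "B\<in>F" "B\<inter>S = {}" using that unfolding avoid_def by auto
    have "S \<noteq> {}" using cS by auto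
    hence "A \<noteq> B" using B unfolding S_def by auto
    hence "card (B\<inter>A) = 1" using lin A B by auto
    then obtain z where "B\<inter>A = {z}" using card_1_singleton_iff by (metis One_nat_def)
    hence "z = x" "z\<in>B" using B unfolding S_def by auto
    thus ?thesis using B \<open>A\<noteq>B\<close> by auto
  qed
  have m: "B1 \<in> avoid F S" "B2 \<in> avoid F S" "B3 \<in> avoid F S" using T(1) T3(1) by auto
  note k1 = key[OF m(1)] and k2 = key[OF m(2)] and k3 = key[OF m(3)]
  show ?thesis by (rule exI[of _ B1], rule exI[of _ B2], rule exI[of _ B3]) (use k1 k2 k3 T3 in blast)
qed

lemma join:
  assumes c4: "\<forall>A\<in>F. card A = 4" and lin: "\<forall>A\<in>F. \<forall>B\<in>F. A \<noteq> B \<longrightarrow> card (A \<inter> B) = 1"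
  and G: "\<And>S. S \<subseteq> {1..n} \<Longrightarrow> card S = 3 \<Longrightarrow> 3 \<le> card (avoid F S)"
  and sub: "\<forall>A\<in>F. A \<subseteq> {1..n}"
  and x: "A\<in>F" "x\<in>A" and y: "C\<in>F" "y\<in>C" and xy: "x\<noteq>y"
  shows "\<exists>L\<in>F. x\<in>L \<and> y\<in>L"
proof (cases "x\<in>C")
  case True thus ?thesis using y by auto
next
  case False
  obtain B1 B2 B3 where B: "B1\<in>F" "B2\<in>F" "B3\<in>F" "x\<in>B1" "x\<in>B2" "x\<in>B3"
     "A\<noteq>B1" "A\<noteq>B2" "A\<noteq>B3" "B1\<noteq>B2" "B1\<noteq>B3" "B2\<noteq>B3"
    using deg4[OF c4 lin G sub x] by blast
  have mz: "\<exists>z. z\<in>L \<and> z\<in>C" if "L\<in>F" "x\<in>L" for L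
    using meet[OF lin that(1) y(1)] that False by auto
  obtain z0 where z0: "z0\<in>A" "z0\<in>C" using mz x by blast
  obtain z1 where z1: "z1\<in>B1" "z1\<in>C" using mz B by blast
  obtain z2 where z2: "z2\<in>B2" "z2\<in>C" using mz B by blast
  obtain z3 where z3: "z3\<in>B3" "z3\<in>C" using mz B by blast
  have dz: "z\<noteq>z'" if "L\<in>F" "L'\<in>F" "L\<noteq>L'" "x\<in>L" "x\<in>L'" "z\<in>L" "z'\<in>L'" "z\<in>C" for L L' z z'
  proof
    assume "z = z'"
    hence zL': "z\<in>L'" using that(7) by simp
    have "x\<noteq>z" using that(8) False by auto
    hence "L = L'" using R1[OF c4 lin that(1,2) that(4) that(6) that(5) zL'] by simp
    thus False using that by auto
  qed
  have d: "z0\<noteq>z1" "z0\<noteq>z2" "z0\<noteq>z3" "z1\<noteq>z2" "z1\<noteq>z3" "z2\<noteq>z3"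
    by (rule dz[OF x(1) B(1) B(7) x(2) B(4) z0(1) z1(1) z0(2)], rule dz[OF x(1) B(2) B(8) x(2) B(5) z0(1) z2(1) z0(2)],
        rule dz[OF x(1) B(3) B(9) x(2) B(6) z0(1) z3(1) z0(2)], rule dz[OF B(1) B(2) B(10) B(4) B(5) z1(1) z2(1) z1(2)],
        rule dz[OF B(1) B(3) B(11) B(4) B(6) z1(1) z3(1) z1(2)], rule dz[OF B(2) B(3) B(12) B(5) B(6) z2(1) z3(1) z2(2)])
  have fC: "finite C" using c4 y(1) by (intro card_ge_0_finite) simp
  have "{z0,z1,z2,z3} = C"
    by (rule card_seteq[OF fC]) (use z0 z1 z2 z3 d c4 y in auto)
  hence "y=z0 \<or> y=z1 \<or> y=z2 \<or> y=z3" using y by auto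
  thus ?thesis using z0 z1 z2 z3 B x by auto
qed

lemma exq3: assumes "card L = 4" shows "\<exists>q\<in>L. q\<noteq>a \<and> q\<noteq>b \<and> q\<noteq>c"
proof (rule ccontr)
  assume "\<not> ?thesis"
  hence "L \<subseteq> {a,b,c}" by auto
  hence "card L \<le> card {a,b,c}" by (simp add: card_mono)
  also have "\<dots> \<le> 3" by (simp add: card_insert_if)
  finally show False using assms by simp
qed

theorem lemma4p7:
  fixes n :: nat and F :: "nat set set"
  assumes "3 \<le> n"
    and "\<forall>A\<in>F. A \<subseteq> {1..n} \<and> card A = 4"
    and "gamma3 n F \<ge> 3"
    and "\<forall>A\<in>F. \<forall>B\<in>F. A \<noteq> B \<longrightarrow> card (A \<inter> B) = 1"
  shows "isomorphic F L3"
proof -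
  have c4: "\<forall>A\<in>F. card A = 4" using assms(2) by auto
  have sub: "\<forall>A\<in>F. A \<subseteq> {1..n}" using assms(2) by auto
  have lin: "\<forall>A\<in>F. \<forall>B\<in>F. A \<noteq> B \<longrightarrow> card (A \<inter> B) = 1" using assms(4) .
  have finF: "finite F" using sub by (meson Pow_iff finite_Pow_iff finite_atLeastAtMost finite_subset subsetI)
  have G: "3 \<le> card (avoid F S)" if "S \<subseteq> {1..n}" "card S = 3" for S
  proof -
    let ?X = "{card (avoid F S) | S. S \<subseteq> {1..n} \<and> card S = 3}"
    have "?X \<subseteq> (\<lambda>S. card (avoid F S)) ` Pow {1..n}" by auto
    hence "finite ?X" by (rule finite_subset) simp
    moreover have "card (avoid F S) \<in> ?X" using that by auto
    ultimately have "Min ?X \<le> card (avoid F S)" by (rule Min_le)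
    thus ?thesis using assms(3) unfolding gamma3_def by simp
  qed
  have c4F: "\<And>L. L\<in>F \<Longrightarrow> card L = 4" using c4 by auto
  have R: "\<And>L M x y. L\<in>F \<Longrightarrow> M\<in>F \<Longrightarrow> x\<in>L \<Longrightarrow> y\<in>L \<Longrightarrow> x\<in>M \<Longrightarrow> y\<in>M \<Longrightarrow> x\<noteq>y \<Longrightarrow> L=M"
    using R1[OF c4 lin] by blast
  have B1: "\<And>L M x y r. L\<in>F \<Longrightarrow> M\<in>F \<Longrightarrow> x\<in>L \<Longrightarrow> y\<in>L \<Longrightarrow> x\<noteq>y \<Longrightarrow> x\<in>M \<Longrightarrow> r\<in>L \<Longrightarrow> r\<notin>M \<Longrightarrow> y\<notin>M"
    using R by blast
  have B2: "\<And>L M x y r. L\<in>F \<Longrightarrow> M\<in>F \<Longrightarrow> x\<in>L \<Longrightarrow> y\<in>L \<Longrightarrow> x\<noteq>y \<Longrightarrow> x\<in>M \<Longrightarrow> r\<in>M \<Longrightarrow> r\<notin>L \<Longrightarrow> y\<notin>M"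
    using R by blast
  have B3: "\<And>L M x y. L\<in>F \<Longrightarrow> M\<in>F \<Longrightarrow> x\<in>L \<Longrightarrow> y\<in>L \<Longrightarrow> x\<noteq>y \<Longrightarrow> x\<in>M \<Longrightarrow> L\<noteq>M \<Longrightarrow> y\<notin>M"
    using R by blast
  have A: "\<And>x y L. x\<in>L \<Longrightarrow> y\<notin>L \<Longrightarrow> x\<noteq>y" by auto
  have A2: "\<And>x y L. y\<notin>L \<Longrightarrow> x\<in>L \<Longrightarrow> y\<noteq>x" by auto
  have E: "\<And>x L M. x\<in>L \<Longrightarrow> x\<notin>M \<Longrightarrow> L\<noteq>M" by auto
  have E2: "\<And>x L M. x\<notin>M \<Longrightarrow> x\<in>L \<Longrightarrow> M\<noteq>L" by auto
  have EQ: "\<And>L a b c d. L\<in>F \<Longrightarrow> a\<in>L \<Longrightarrow> b\<in>L \<Longrightarrow> c\<in>L \<Longrightarrow> d\<in>L \<Longrightarrow> a\<noteq>b \<Longrightarrow> a\<noteq>c \<Longrightarrow> a\<noteq>d \<Longrightarrow> b\<noteq>c \<Longrightarrow> b\<noteq>d \<Longrightarrow> c\<noteq>d \<Longrightarrow> L = {a,b,c,d}"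
  proof -
    fix L a b c d assume h: "L\<in>F" "a\<in>L" "b\<in>L" "c\<in>L" "d\<in>L" "a\<noteq>b" "a\<noteq>c" "a\<noteq>d" "b\<noteq>c" "b\<noteq>d" "c\<noteq>d"
    have fL: "finite L" using c4F[OF h(1)] by (intro card_ge_0_finite) simp
    show "L = {a,b,c,d}" by (rule sym, rule card_seteq[OF fL]) (use h c4F[OF h(1)] in auto)
  qed
  have C: "\<And>L a b c d y. L\<in>F \<Longrightarrow> a\<in>L \<Longrightarrow> b\<in>L \<Longrightarrow> c\<in>L \<Longrightarrow> d\<in>L \<Longrightarrow> a\<noteq>b \<Longrightarrow> a\<noteq>c \<Longrightarrow> a\<noteq>d \<Longrightarrow> b\<noteq>c \<Longrightarrow> b\<noteq>d \<Longrightarrow> c\<noteq>d \<Longrightarrow> y\<noteq>a \<Longrightarrow> y\<noteq>b \<Longrightarrow> y\<noteq>c \<Longrightarrow> y\<noteq>d \<Longrightarrow> y\<notin>L"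
  proof -
    fix L a b c d y assume h: "L\<in>F" "a\<in>L" "b\<in>L" "c\<in>L" "d\<in>L" "a\<noteq>b" "a\<noteq>c" "a\<noteq>d" "b\<noteq>c" "b\<noteq>d" "c\<noteq>d" "y\<noteq>a" "y\<noteq>b" "y\<noteq>c" "y\<noteq>d"
    have "L = {a,b,c,d}" using EQ[OF h(1-11)] .
    thus "y\<notin>L" using h by auto
  qed
  have MT: "\<And>L M. L\<in>F \<Longrightarrow> M\<in>F \<Longrightarrow> L\<noteq>M \<Longrightarrow> \<exists>z. z\<in>L \<and> z\<in>M" using meet[OF lin] by blast
  have J: "\<And>x L y M. x\<in>L \<Longrightarrow> L\<in>F \<Longrightarrow> y\<in>M \<Longrightarrow> M\<in>F \<Longrightarrow> x\<noteq>y \<Longrightarrow> \<exists>N\<in>F. x\<in>N \<and> y\<in>N"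
    using join[OF c4 lin G sub] by blast
  have S3: "{1,2,3} \<subseteq> {1..n}" "card {1,2,3::nat} = 3" using assms(1) by auto
  have "avoid F {1,2,3} \<noteq> {}" using G[OF S3] by (metis card.empty not_numeral_le_zero)
  then obtain l0 where F_0: "l0 \<in> F" unfolding avoid_def by auto
  have "l0 \<noteq> {}" using c4F[OF F_0] by auto
  then obtain p3 where i_3_0: "p3 \<in> l0" by auto
  obtain l2 l3 l7 where F_2: "l2\<in>F" and F_3: "l3\<in>F" and F_7: "l7\<in>F" and i_3_2: "p3\<in>l2" and i_3_3: "p3\<in>l3" and i_3_7: "p3\<in>l7"
     and e_0_2: "l0\<noteq>l2" and e_0_3: "l0\<noteq>l3" and e_0_7: "l0\<noteq>l7" and e_2_3: "l2\<noteq>l3" and e_2_7: "l2\<noteq>l7" and e_3_7: "l3\<noteq>l7"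
    using deg4[OF c4 lin G sub F_0 i_3_0] by blast
  note e_2_0 = e_0_2[symmetric] and e_3_0 = e_0_3[symmetric] and e_7_0 = e_0_7[symmetric]
    and e_3_2 = e_2_3[symmetric] and e_7_2 = e_2_7[symmetric] and e_7_3 = e_3_7[symmetric]
  have "card (l0 - {p3}) = 3" using c4F[OF F_0] i_3_0 by (simp add: card_Diff_singleton)
  then obtain p0 p1 p9 where "l0 - {p3} = {p0,p1,p9}" and d_0_1: "p0\<noteq>p1" and d_1_9: "p1\<noteq>p9" and d_0_9: "p0\<noteq>p9"
    by (auto simp: card_3_iff)
  hence i_0_0: "p0\<in>l0" and i_1_0: "p1\<in>l0" and i_9_0: "p9\<in>l0" and d_0_3: "p0\<noteq>p3" and d_1_3: "p1\<noteq>p3" and d_9_3: "p9\<noteq>p3" by auto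
  note d_1_0 = d_0_1[symmetric] and d_9_1 = d_1_9[symmetric] and d_9_0 = d_0_9[symmetric]
    and d_3_0 = d_0_3[symmetric] and d_3_1 = d_1_3[symmetric] and d_3_9 = d_9_3[symmetric]
  obtain p2 where i_2_2: "p2\<in>l2" and d_2_3: "p2\<noteq>p3" using exq3[OF c4F[OF F_2], of p3 p3 p3] by blast
  note d_3_2 = d_2_3[symmetric]
  have n_2_0: "p2 \<notin> l0" by (rule B3[OF F_2 F_0 i_3_2 i_2_2 d_3_2 i_3_0 e_2_0])
  have d_0_2: "p0 \<noteq> p2" by (rule A[OF i_0_0 n_2_0])
  obtain l12 where F_12: "l12 \<in> F" and i_0_12: "p0 \<in> l12" and i_2_12: "p2 \<in> l12" using J[OF i_0_0 F_0 i_2_2 F_2 d_0_2] by blast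
  have d_1_2: "p1 \<noteq> p2" by (rule A[OF i_1_0 n_2_0])
  obtain l1 where F_1: "l1 \<in> F" and i_1_1: "p1 \<in> l1" and i_2_1: "p2 \<in> l1" using J[OF i_1_0 F_0 i_2_2 F_2 d_1_2] by blast
  have n_9_2: "p9 \<notin> l2" by (rule B3[OF F_0 F_2 i_3_0 i_9_0 d_3_9 i_3_2 e_0_2])
  have d_9_2: "p9 \<noteq> p2" by (rule A2[OF n_9_2 i_2_2])
  obtain l6 where F_6: "l6 \<in> F" and i_9_6: "p9 \<in> l6" and i_2_6: "p2 \<in> l6" using J[OF i_9_0 F_0 i_2_1 F_1 d_9_2] by blast
  have n_1_3: "p1 \<notin> l3" by (rule B3[OF F_0 F_3 i_3_0 i_1_0 d_3_1 i_3_3 e_0_3])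
  have e_1_3: "l1 \<noteq> l3" by (rule E[OF i_1_1 n_1_3])
  obtain p4 where i_4_1: "p4 \<in> l1" and i_4_3: "p4 \<in> l3" using MT[OF F_1 F_3 e_1_3] by blast
  have n_1_7: "p1 \<notin> l7" by (rule B3[OF F_0 F_7 i_3_0 i_1_0 d_3_1 i_3_7 e_0_7])
  have e_1_7: "l1 \<noteq> l7" by (rule E[OF i_1_1 n_1_7])
  obtain p10 where i_10_1: "p10 \<in> l1" and i_10_7: "p10 \<in> l7" using MT[OF F_1 F_7 e_1_7] by blast
  have n_0_3: "p0 \<notin> l3" by (rule B3[OF F_0 F_3 i_3_0 i_0_0 d_3_0 i_3_3 e_0_3])
  have e_12_3: "l12 \<noteq> l3" by (rule E[OF i_0_12 n_0_3])
  obtain p12 where i_12_12: "p12 \<in> l12" and i_12_3: "p12 \<in> l3" using MT[OF F_12 F_3 e_12_3] by blast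
  have n_0_7: "p0 \<notin> l7" by (rule B3[OF F_0 F_7 i_3_0 i_0_0 d_3_0 i_3_7 e_0_7])
  have e_12_7: "l12 \<noteq> l7" by (rule E[OF i_0_12 n_0_7])
  obtain p8 where i_8_12: "p8 \<in> l12" and i_8_7: "p8 \<in> l7" using MT[OF F_12 F_7 e_12_7] by blast
  have n_2_3: "p2 \<notin> l3" by (rule B3[OF F_2 F_3 i_3_2 i_2_2 d_3_2 i_3_3 e_2_3])
  have e_6_3: "l6 \<noteq> l3" by (rule E[OF i_2_6 n_2_3])
  obtain p6 where i_6_6: "p6 \<in> l6" and i_6_3: "p6 \<in> l3" using MT[OF F_6 F_3 e_6_3] by blast
  have n_2_7: "p2 \<notin> l7" by (rule B3[OF F_2 F_7 i_3_2 i_2_2 d_3_2 i_3_7 e_2_7])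
  have e_6_7: "l6 \<noteq> l7" by (rule E[OF i_2_6 n_2_7])
  obtain p7 where i_7_6: "p7 \<in> l6" and i_7_7: "p7 \<in> l7" using MT[OF F_6 F_7 e_6_7] by blast
  have n_0_1: "p0 \<notin> l1" by (rule B2[OF F_0 F_1 i_1_0 i_0_0 d_1_0 i_1_1 i_2_1 n_2_0])
  have d_0_4: "p0 \<noteq> p4" by (rule A2[OF n_0_1 i_4_1])
  obtain l4 where F_4: "l4 \<in> F" and i_0_4: "p0 \<in> l4" and i_4_4: "p4 \<in> l4" using J[OF i_0_0 F_0 i_4_1 F_1 d_0_4] by blast
  have n_0_2: "p0 \<notin> l2" by (rule B3[OF F_0 F_2 i_3_0 i_0_0 d_3_0 i_3_2 e_0_2])
  have e_4_2: "l4 \<noteq> l2" by (rule E[OF i_0_4 n_0_2])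
  obtain p5 where i_5_4: "p5 \<in> l4" and i_5_2: "p5 \<in> l2" using MT[OF F_4 F_2 e_4_2] by blast
  have d_0_6: "p0 \<noteq> p6" by (rule A2[OF n_0_3 i_6_3])
  obtain l10 where F_10: "l10 \<in> F" and i_0_10: "p0 \<in> l10" and i_6_10: "p6 \<in> l10" using J[OF i_0_0 F_0 i_6_3 F_3 d_0_6] by blast
  have e_10_2: "l10 \<noteq> l2" by (rule E[OF i_0_10 n_0_2])
  obtain p11 where i_11_10: "p11 \<in> l10" and i_11_2: "p11 \<in> l2" using MT[OF F_10 F_2 e_10_2] by blast
  have n_1_12: "p1 \<notin> l12" by (rule B2[OF F_0 F_12 i_0_0 i_1_0 d_0_1 i_0_12 i_2_12 n_2_0])
  have n_3_12: "p3 \<notin> l12" by (rule B2[OF F_0 F_12 i_0_0 i_3_0 d_0_3 i_0_12 i_2_12 n_2_0])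
  have n_3_1: "p3 \<notin> l1" by (rule B2[OF F_0 F_1 i_1_0 i_3_0 d_1_3 i_1_1 i_2_1 n_2_0])
  have n_0_6: "p0 \<notin> l6" by (rule B2[OF F_0 F_6 i_9_0 i_0_0 d_9_0 i_9_6 i_2_6 n_2_0])
  have n_1_6: "p1 \<notin> l6" by (rule B2[OF F_0 F_6 i_9_0 i_1_0 d_9_1 i_9_6 i_2_6 n_2_0])
  have n_3_6: "p3 \<notin> l6" by (rule B2[OF F_0 F_6 i_9_0 i_3_0 d_9_3 i_9_6 i_2_6 n_2_0])
  have d_3_4: "p3 \<noteq> p4" by (rule A2[OF n_3_1 i_4_1])
  have d_1_4: "p1 \<noteq> p4" by (rule A2[OF n_1_3 i_4_3])
  have d_4_2: "p4 \<noteq> p2" by (rule A[OF i_4_3 n_2_3])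
  have d_2_4: "p2 \<noteq> p4" by (rule A2[OF n_2_3 i_4_3])
  have n_4_0: "p4 \<notin> l0" by (rule B1[OF F_1 F_0 i_1_1 i_4_1 d_1_4 i_1_0 i_2_1 n_2_0])
  have n_4_6: "p4 \<notin> l6" by (rule B1[OF F_1 F_6 i_2_1 i_4_1 d_2_4 i_2_6 i_1_1 n_1_6])
  have n_4_12: "p4 \<notin> l12" by (rule B1[OF F_1 F_12 i_2_1 i_4_1 d_2_4 i_2_12 i_1_1 n_1_12])
  have n_4_7: "p4 \<notin> l7" by (rule B3[OF F_3 F_7 i_3_3 i_4_3 d_3_4 i_3_7 e_3_7])
  have d_10_3: "p10 \<noteq> p3" by (rule A[OF i_10_1 n_3_1])
  have d_3_10: "p3 \<noteq> p10" by (rule A2[OF n_3_1 i_10_1])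
  have d_1_10: "p1 \<noteq> p10" by (rule A2[OF n_1_7 i_10_7])
  have d_2_10: "p2 \<noteq> p10" by (rule A2[OF n_2_7 i_10_7])
  have d_4_10: "p4 \<noteq> p10" by (rule A2[OF n_4_7 i_10_7])
  have n_10_6: "p10 \<notin> l6" by (rule B1[OF F_1 F_6 i_2_1 i_10_1 d_2_10 i_2_6 i_1_1 n_1_6])
  have n_10_12: "p10 \<notin> l12" by (rule B1[OF F_1 F_12 i_2_1 i_10_1 d_2_10 i_2_12 i_1_1 n_1_12])
  have d_2_12: "p2 \<noteq> p12" by (rule A2[OF n_2_3 i_12_3])
  have d_3_12: "p3 \<noteq> p12" by (rule A2[OF n_3_12 i_12_12])
  have d_4_12: "p4 \<noteq> p12" by (rule A2[OF n_4_12 i_12_12])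
  have n_12_6: "p12 \<notin> l6" by (rule B1[OF F_12 F_6 i_2_12 i_12_12 d_2_12 i_2_6 i_0_12 n_0_6])
  have d_2_8: "p2 \<noteq> p8" by (rule A2[OF n_2_7 i_8_7])
  have d_8_3: "p8 \<noteq> p3" by (rule A[OF i_8_12 n_3_12])
  have d_8_10: "p8 \<noteq> p10" by (rule A[OF i_8_12 n_10_12])
  have n_8_6: "p8 \<notin> l6" by (rule B1[OF F_12 F_6 i_2_12 i_8_12 d_2_8 i_2_6 i_0_12 n_0_6])
  have d_6_2: "p6 \<noteq> p2" by (rule A[OF i_6_3 n_2_3])
  have d_3_6: "p3 \<noteq> p6" by (rule A2[OF n_3_6 i_6_6])
  have d_6_4: "p6 \<noteq> p4" by (rule A[OF i_6_6 n_4_6])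
  have d_4_6: "p4 \<noteq> p6" by (rule A2[OF n_4_6 i_6_6])
  have d_6_12: "p6 \<noteq> p12" by (rule A[OF i_6_6 n_12_6])
  have n_6_0: "p6 \<notin> l0" by (rule B1[OF F_3 F_0 i_3_3 i_6_3 d_3_6 i_3_0 i_4_3 n_4_0])
  have d_7_3: "p7 \<noteq> p3" by (rule A[OF i_7_6 n_3_6])
  have d_7_8: "p7 \<noteq> p8" by (rule A[OF i_7_6 n_8_6])
  have d_7_10: "p7 \<noteq> p10" by (rule A[OF i_7_6 n_10_6])
  have n_1_4: "p1 \<notin> l4" by (rule B2[OF F_0 F_4 i_0_0 i_1_0 d_0_1 i_0_4 i_4_4 n_4_0])
  have n_3_4: "p3 \<notin> l4" by (rule B2[OF F_0 F_4 i_0_0 i_3_0 d_0_3 i_0_4 i_4_4 n_4_0])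
  have n_2_4: "p2 \<notin> l4" by (rule B1[OF F_1 F_4 i_4_1 i_2_1 d_4_2 i_4_4 i_1_1 n_1_4])
  have d_0_5: "p0 \<noteq> p5" by (rule A2[OF n_0_2 i_5_2])
  have d_2_5: "p2 \<noteq> p5" by (rule A2[OF n_2_4 i_5_4])
  have d_3_5: "p3 \<noteq> p5" by (rule A2[OF n_3_4 i_5_4])
  have n_3_10: "p3 \<notin> l10" by (rule B2[OF F_0 F_10 i_0_0 i_3_0 d_0_3 i_0_10 i_6_10 n_6_0])
  have n_9_10: "p9 \<notin> l10" by (rule B2[OF F_0 F_10 i_0_0 i_9_0 d_0_9 i_0_10 i_6_10 n_6_0])
  have n_4_10: "p4 \<notin> l10" by (rule B1[OF F_3 F_10 i_6_3 i_4_3 d_6_4 i_6_10 i_3_3 n_3_10])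
  have n_5_10: "p5 \<notin> l10" by (rule B1[OF F_4 F_10 i_0_4 i_5_4 d_0_5 i_0_10 i_4_4 n_4_10])
  have n_2_10: "p2 \<notin> l10" by (rule B1[OF F_6 F_10 i_6_6 i_2_6 d_6_2 i_6_10 i_9_6 n_9_10])
  have d_2_11: "p2 \<noteq> p11" by (rule A2[OF n_2_10 i_11_10])
  have d_3_11: "p3 \<noteq> p11" by (rule A2[OF n_3_10 i_11_10])
  have d_5_11: "p5 \<noteq> p11" by (rule A2[OF n_5_10 i_11_10])
  have eq0: "l0 = {p0,p1,p3,p9}" by (rule EQ[OF F_0 i_0_0 i_1_0 i_3_0 i_9_0 d_0_1 d_0_3 d_0_9 d_1_3 d_1_9 d_3_9])
  have eq1: "l1 = {p1,p2,p4,p10}" by (rule EQ[OF F_1 i_1_1 i_2_1 i_4_1 i_10_1 d_1_2 d_1_4 d_1_10 d_2_4 d_2_10 d_4_10])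
  have eq2: "l2 = {p2,p3,p5,p11}" by (rule EQ[OF F_2 i_2_2 i_3_2 i_5_2 i_11_2 d_2_3 d_2_5 d_2_11 d_3_5 d_3_11 d_5_11])
  have eq3: "l3 = {p3,p4,p6,p12}" by (rule EQ[OF F_3 i_3_3 i_4_3 i_6_3 i_12_3 d_3_4 d_3_6 d_3_12 d_4_6 d_4_12 d_6_12])
  have eq7: "l7 = {p7,p8,p10,p3}" by (rule EQ[OF F_7 i_7_7 i_8_7 i_10_7 i_3_7 d_7_8 d_7_10 d_7_3 d_8_10 d_8_3 d_10_3])
  define N where "N = {p0,p1,p2,p3,p4,p5,p6,p7,p8,p9,p10,p11,p12}"
  have T3: "B=l0 \<or> B=l2 \<or> B=l3 \<or> B=l7" if B: "B\<in>F" "p3\<in>B" for B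
  proof -
    have "B \<noteq> l1" using B n_3_1 by auto
    then obtain z where z: "z\<in>B" "z\<in>l1" using MT[OF B(1) F_1] by blast
    have "z=p1 \<or> z=p2 \<or> z=p4 \<or> z=p10" using z eq1 by simp
    moreover have "z=p1 \<Longrightarrow> B=l0" using R[OF B(1) F_0 B(2) _ i_3_0 i_1_0 d_3_1] z by blast
    moreover have "z=p2 \<Longrightarrow> B=l2" using R[OF B(1) F_2 B(2) _ i_3_2 i_2_2 d_3_2] z by blast
    moreover have "z=p4 \<Longrightarrow> B=l3" using R[OF B(1) F_3 B(2) _ i_3_3 i_4_3 d_3_4] z by blast
    moreover have "z=p10 \<Longrightarrow> B=l7" using R[OF B(1) F_7 B(2) _ i_3_7 i_10_7 d_3_10] z by blast
    ultimately show ?thesis by blast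
  qed
  have Vc: "y\<in>N" if B: "B\<in>F" "y\<in>B" for B y
  proof (cases "p3\<in>B")
    case True
    then show ?thesis using T3[OF B(1) True] B eq0 eq2 eq3 eq7 unfolding N_def by auto
  next
    case False
    have z: "\<exists>z. z\<in>B \<and> z\<in>L \<and> z \<noteq> p3" if "L\<in>F" "p3\<in>L" for L
      using MT[OF B(1) that(1)] that False by metis
    obtain z0 where z0: "z0\<in>B" "z0\<in>l0" "z0\<noteq>p3" using z[OF F_0 i_3_0] by blast
    obtain z2 where z2: "z2\<in>B" "z2\<in>l2" "z2\<noteq>p3" using z[OF F_2 i_3_2] by blast
    obtain z3 where z3: "z3\<in>B" "z3\<in>l3" "z3\<noteq>p3" using z[OF F_3 i_3_3] by blast
    obtain z7 where z7: "z7\<in>B" "z7\<in>l7" "z7\<noteq>p3" using z[OF F_7 i_3_7] by blast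
    have dz: "u\<noteq>v" if "L\<in>F" "M\<in>F" "L\<noteq>M" "p3\<in>L" "p3\<in>M" "u\<in>L" "v\<in>M" "u\<noteq>p3" for L M u v
      using R[OF that(1,2) that(4)] that by metis
    have "B = {z0,z2,z3,z7}"
      by (rule EQ[OF B(1) z0(1) z2(1) z3(1) z7(1)]) (use dz[OF F_0 F_2 e_0_2 i_3_0 i_3_2] dz[OF F_0 F_3 e_0_3 i_3_0 i_3_3] dz[OF F_0 F_7 e_0_7 i_3_0 i_3_7] dz[OF F_2 F_3 e_2_3 i_3_2 i_3_3] dz[OF F_2 F_7 e_2_7 i_3_2 i_3_7] dz[OF F_3 F_7 e_3_7 i_3_3 i_3_7] z0 z2 z3 z7 in auto)
    then show ?thesis using B z0 z2 z3 z7 eq0 eq2 eq3 eq7 unfolding N_def by auto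
  qed
  have d_0_8: "p0 \<noteq> p8" by (rule A2[OF n_0_7 i_8_7])
  have n_9_4: "p9 \<notin> l4" by (rule B2[OF F_0 F_4 i_0_0 i_9_0 d_0_9 i_0_4 i_4_4 n_4_0])
  have n_10_4: "p10 \<notin> l4" by (rule B1[OF F_1 F_4 i_4_1 i_10_1 d_4_10 i_4_4 i_1_1 n_1_4])
  have n_6_4: "p6 \<notin> l4" by (rule B1[OF F_3 F_4 i_4_3 i_6_3 d_4_6 i_4_4 i_3_3 n_3_4])
  have n_12_4: "p12 \<notin> l4" by (rule B1[OF F_3 F_4 i_4_3 i_12_3 d_4_12 i_4_4 i_3_3 n_3_4])
  have n_8_4: "p8 \<notin> l4" by (rule B1[OF F_12 F_4 i_0_12 i_8_12 d_0_8 i_0_4 i_2_12 n_2_4])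
  have n_11_4: "p11 \<notin> l4" by (rule B1[OF F_2 F_4 i_5_2 i_11_2 d_5_11 i_5_4 i_2_2 n_2_4])
  obtain q where q: "q\<in>l4" "q\<noteq>p0" "q\<noteq>p4" "q\<noteq>p5" using exq3[OF c4F[OF F_4]] by blast
  have "q\<in>N" using Vc[OF F_4 q(1)] .
  hence "q = p7" using q n_1_4 n_2_4 n_3_4 n_6_4 n_8_4 n_9_4 n_10_4 n_11_4 n_12_4 unfolding N_def by auto
  hence i_7_4: "p7 \<in> l4" using q by simp
  have n_6_7: "p6 \<notin> l7" by (rule B1[OF F_3 F_7 i_3_3 i_6_3 d_3_6 i_3_7 i_4_3 n_4_7])
  have d_6_7: "p6 \<noteq> p7" by (rule A2[OF n_6_7 i_7_7])
  have n_1_10: "p1 \<notin> l10" by (rule B2[OF F_0 F_10 i_0_0 i_1_0 d_0_1 i_0_10 i_6_10 n_6_0])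
  have n_12_10: "p12 \<notin> l10" by (rule B1[OF F_3 F_10 i_6_3 i_12_3 d_6_12 i_6_10 i_3_3 n_3_10])
  have n_7_10: "p7 \<notin> l10" by (rule B1[OF F_6 F_10 i_6_6 i_7_6 d_6_7 i_6_10 i_9_6 n_9_10])
  have n_8_10: "p8 \<notin> l10" by (rule B1[OF F_12 F_10 i_0_12 i_8_12 d_0_8 i_0_10 i_2_12 n_2_10])
  obtain q where q: "q\<in>l10" "q\<noteq>p0" "q\<noteq>p6" "q\<noteq>p11" using exq3[OF c4F[OF F_10]] by blast
  have "q\<in>N" using Vc[OF F_10 q(1)] .
  hence "q = p10" using q n_1_10 n_2_10 n_3_10 n_4_10 n_5_10 n_7_10 n_8_10 n_9_10 n_12_10 unfolding N_def by auto
  hence i_10_10: "p10 \<in> l10" using q by simp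
  have d_1_7: "p1 \<noteq> p7" by (rule A2[OF n_1_6 i_7_6])
  obtain l11 where F_11: "l11 \<in> F" and i_1_11: "p1 \<in> l11" and i_7_11: "p7 \<in> l11" using J[OF i_1_0 F_0 i_7_4 F_4 d_1_7] by blast
  have n_1_2: "p1 \<notin> l2" by (rule B3[OF F_0 F_2 i_3_0 i_1_0 d_3_1 i_3_2 e_0_2])
  have n_9_7: "p9 \<notin> l7" by (rule B3[OF F_0 F_7 i_3_0 i_9_0 d_3_9 i_3_7 e_0_7])
  have n_4_2: "p4 \<notin> l2" by (rule B1[OF F_1 F_2 i_2_1 i_4_1 d_2_4 i_2_2 i_1_1 n_1_2])
  have n_6_1: "p6 \<notin> l1" by (rule B1[OF F_3 F_1 i_4_3 i_6_3 d_4_6 i_4_1 i_3_3 n_3_1])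
  have n_6_2: "p6 \<notin> l2" by (rule B1[OF F_3 F_2 i_3_3 i_6_3 d_3_6 i_3_2 i_4_3 n_4_2])
  have d_2_7: "p2 \<noteq> p7" by (rule A2[OF n_2_7 i_7_7])
  have d_7_6: "p7 \<noteq> p6" by (rule A[OF i_7_7 n_6_7])
  have d_9_7: "p9 \<noteq> p7" by (rule A2[OF n_9_7 i_7_7])
  have n_7_0: "p7 \<notin> l0" by (rule B1[OF F_6 F_0 i_9_6 i_7_6 d_9_7 i_9_0 i_2_6 n_2_0])
  have n_7_1: "p7 \<notin> l1" by (rule B1[OF F_6 F_1 i_2_6 i_7_6 d_2_7 i_2_1 i_6_6 n_6_1])
  have n_7_2: "p7 \<notin> l2" by (rule B1[OF F_6 F_2 i_2_6 i_7_6 d_2_7 i_2_2 i_6_6 n_6_2])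
  have d_7_5: "p7 \<noteq> p5" by (rule A2[OF n_7_2 i_5_2])
  have n_0_11: "p0 \<notin> l11" by (rule B2[OF F_0 F_11 i_1_0 i_0_0 d_1_0 i_1_11 i_7_11 n_7_0])
  have n_3_11: "p3 \<notin> l11" by (rule B2[OF F_0 F_11 i_1_0 i_3_0 d_1_3 i_1_11 i_7_11 n_7_0])
  have n_9_11: "p9 \<notin> l11" by (rule B2[OF F_0 F_11 i_1_0 i_9_0 d_1_9 i_1_11 i_7_11 n_7_0])
  have n_2_11: "p2 \<notin> l11" by (rule B2[OF F_1 F_11 i_1_1 i_2_1 d_1_2 i_1_11 i_7_11 n_7_1])
  have n_4_11: "p4 \<notin> l11" by (rule B2[OF F_1 F_11 i_1_1 i_4_1 d_1_4 i_1_11 i_7_11 n_7_1])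
  have n_10_11: "p10 \<notin> l11" by (rule B2[OF F_1 F_11 i_1_1 i_10_1 d_1_10 i_1_11 i_7_11 n_7_1])
  have n_5_11: "p5 \<notin> l11" by (rule B1[OF F_4 F_11 i_7_4 i_5_4 d_7_5 i_7_11 i_0_4 n_0_11])
  have n_6_11: "p6 \<notin> l11" by (rule B1[OF F_6 F_11 i_7_6 i_6_6 d_7_6 i_7_11 i_2_6 n_2_11])
  have n_8_11: "p8 \<notin> l11" by (rule B1[OF F_7 F_11 i_7_7 i_8_7 d_7_8 i_7_11 i_3_7 n_3_11])
  obtain q1 where q1: "q1\<in>l11" "q1\<noteq>p1" "q1\<noteq>p7" using exq3[OF c4F[OF F_11]] by blast
  obtain q2 where q2: "q2\<in>l11" "q2\<noteq>p1" "q2\<noteq>p7" "q2\<noteq>q1" using exq3[OF c4F[OF F_11]] by blast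
  have "q1\<in>N" "q2\<in>N" using Vc[OF F_11 q1(1)] Vc[OF F_11 q2(1)] by auto
  hence "(q1=p11 \<or> q1=p12) \<and> (q2=p11 \<or> q2=p12)" using q1 q2 n_0_11 n_2_11 n_3_11 n_4_11 n_5_11 n_6_11 n_8_11 n_9_11 n_10_11 unfolding N_def by auto
  hence i_11_11: "p11 \<in> l11" and i_12_11: "p12 \<in> l11" using q1 q2 by auto
  have d_1_5: "p1 \<noteq> p5" by (rule A2[OF n_1_2 i_5_2])
  obtain l5 where F_5: "l5 \<in> F" and i_1_5: "p1 \<in> l5" and i_5_5: "p5 \<in> l5" using J[OF i_1_0 F_0 i_5_2 F_2 d_1_5] by blast
  have d_1_12: "p1 \<noteq> p12" by (rule A2[OF n_1_3 i_12_3])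
  have d_5_7: "p5 \<noteq> p7" by (rule A[OF i_5_2 n_7_2])
  have n_5_0: "p5 \<notin> l0" by (rule B1[OF F_2 F_0 i_3_2 i_5_2 d_3_5 i_3_0 i_2_2 n_2_0])
  have n_5_1: "p5 \<notin> l1" by (rule B1[OF F_2 F_1 i_2_2 i_5_2 d_2_5 i_2_1 i_3_2 n_3_1])
  have n_0_5: "p0 \<notin> l5" by (rule B2[OF F_0 F_5 i_1_0 i_0_0 d_1_0 i_1_5 i_5_5 n_5_0])
  have n_3_5: "p3 \<notin> l5" by (rule B2[OF F_0 F_5 i_1_0 i_3_0 d_1_3 i_1_5 i_5_5 n_5_0])
  have n_9_5: "p9 \<notin> l5" by (rule B2[OF F_0 F_5 i_1_0 i_9_0 d_1_9 i_1_5 i_5_5 n_5_0])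
  have n_2_5: "p2 \<notin> l5" by (rule B2[OF F_1 F_5 i_1_1 i_2_1 d_1_2 i_1_5 i_5_5 n_5_1])
  have n_4_5: "p4 \<notin> l5" by (rule B2[OF F_1 F_5 i_1_1 i_4_1 d_1_4 i_1_5 i_5_5 n_5_1])
  have n_10_5: "p10 \<notin> l5" by (rule B2[OF F_1 F_5 i_1_1 i_10_1 d_1_10 i_1_5 i_5_5 n_5_1])
  have n_11_5: "p11 \<notin> l5" by (rule B1[OF F_2 F_5 i_5_2 i_11_2 d_5_11 i_5_5 i_2_2 n_2_5])
  have n_7_5: "p7 \<notin> l5" by (rule B1[OF F_4 F_5 i_5_4 i_7_4 d_5_7 i_5_5 i_0_4 n_0_5])
  have n_12_5: "p12 \<notin> l5" by (rule B1[OF F_11 F_5 i_1_11 i_12_11 d_1_12 i_1_5 i_7_11 n_7_5])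
  obtain q1 where q1: "q1\<in>l5" "q1\<noteq>p1" "q1\<noteq>p5" using exq3[OF c4F[OF F_5]] by blast
  obtain q2 where q2: "q2\<in>l5" "q2\<noteq>p1" "q2\<noteq>p5" "q2\<noteq>q1" using exq3[OF c4F[OF F_5]] by blast
  have "q1\<in>N" "q2\<in>N" using Vc[OF F_5 q1(1)] Vc[OF F_5 q2(1)] by auto
  hence "(q1=p6 \<or> q1=p8) \<and> (q2=p6 \<or> q2=p8)" using q1 q2 n_0_5 n_2_5 n_3_5 n_4_5 n_7_5 n_9_5 n_10_5 n_11_5 n_12_5 unfolding N_def by auto
  hence i_6_5: "p6 \<in> l5" and i_8_5: "p8 \<in> l5" using q1 q2 by auto
  have n_9_1: "p9 \<notin> l1" by (rule B2[OF F_0 F_1 i_1_0 i_9_0 d_1_9 i_1_1 i_2_1 n_2_0])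
  have d_9_4: "p9 \<noteq> p4" by (rule A2[OF n_9_1 i_4_1])
  obtain l8 where F_8: "l8 \<in> F" and i_9_8: "p9 \<in> l8" and i_4_8: "p4 \<in> l8" using J[OF i_9_0 F_0 i_4_1 F_1 d_9_4] by blast
  have d_4_7: "p4 \<noteq> p7" by (rule A2[OF n_4_6 i_7_6])
  have d_4_5: "p4 \<noteq> p5" by (rule A2[OF n_4_2 i_5_2])
  have n_0_8: "p0 \<notin> l8" by (rule B2[OF F_0 F_8 i_9_0 i_0_0 d_9_0 i_9_8 i_4_8 n_4_0])
  have n_1_8: "p1 \<notin> l8" by (rule B2[OF F_0 F_8 i_9_0 i_1_0 d_9_1 i_9_8 i_4_8 n_4_0])
  have n_3_8: "p3 \<notin> l8" by (rule B2[OF F_0 F_8 i_9_0 i_3_0 d_9_3 i_9_8 i_4_8 n_4_0])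
  have n_2_8: "p2 \<notin> l8" by (rule B1[OF F_1 F_8 i_4_1 i_2_1 d_4_2 i_4_8 i_1_1 n_1_8])
  have n_10_8: "p10 \<notin> l8" by (rule B1[OF F_1 F_8 i_4_1 i_10_1 d_4_10 i_4_8 i_1_1 n_1_8])
  have n_6_8: "p6 \<notin> l8" by (rule B1[OF F_3 F_8 i_4_3 i_6_3 d_4_6 i_4_8 i_3_3 n_3_8])
  have n_12_8: "p12 \<notin> l8" by (rule B1[OF F_3 F_8 i_4_3 i_12_3 d_4_12 i_4_8 i_3_3 n_3_8])
  have n_5_8: "p5 \<notin> l8" by (rule B1[OF F_4 F_8 i_4_4 i_5_4 d_4_5 i_4_8 i_0_4 n_0_8])
  have n_7_8: "p7 \<notin> l8" by (rule B1[OF F_4 F_8 i_4_4 i_7_4 d_4_7 i_4_8 i_0_4 n_0_8])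
  obtain q1 where q1: "q1\<in>l8" "q1\<noteq>p9" "q1\<noteq>p4" using exq3[OF c4F[OF F_8]] by blast
  obtain q2 where q2: "q2\<in>l8" "q2\<noteq>p9" "q2\<noteq>p4" "q2\<noteq>q1" using exq3[OF c4F[OF F_8]] by blast
  have "q1\<in>N" "q2\<in>N" using Vc[OF F_8 q1(1)] Vc[OF F_8 q2(1)] by auto
  hence "(q1=p8 \<or> q1=p11) \<and> (q2=p8 \<or> q2=p11)" using q1 q2 n_0_8 n_1_8 n_2_8 n_3_8 n_5_8 n_6_8 n_7_8 n_10_8 n_12_8 unfolding N_def by auto
  hence i_8_8: "p8 \<in> l8" and i_11_8: "p11 \<in> l8" using q1 q2 by auto
  have d_9_5: "p9 \<noteq> p5" by (rule A2[OF n_9_2 i_5_2])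
  obtain l9 where F_9: "l9 \<in> F" and i_9_9: "p9 \<in> l9" and i_5_9: "p5 \<in> l9" using J[OF i_9_0 F_0 i_5_2 F_2 d_9_5] by blast
  have n_10_2: "p10 \<notin> l2" by (rule B1[OF F_1 F_2 i_2_1 i_10_1 d_2_10 i_2_2 i_1_1 n_1_2])
  have d_3_8: "p3 \<noteq> p8" by (rule A2[OF n_3_12 i_8_12])
  have n_8_2: "p8 \<notin> l2" by (rule B1[OF F_7 F_2 i_3_7 i_8_7 d_3_8 i_3_2 i_10_7 n_10_2])
  have d_5_4: "p5 \<noteq> p4" by (rule A[OF i_5_2 n_4_2])
  have d_5_6: "p5 \<noteq> p6" by (rule A[OF i_5_2 n_6_2])
  have d_5_8: "p5 \<noteq> p8" by (rule A[OF i_5_2 n_8_2])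
  have d_5_2: "p5 \<noteq> p2" by (rule A[OF i_5_4 n_2_4])
  have n_0_9: "p0 \<notin> l9" by (rule B2[OF F_0 F_9 i_9_0 i_0_0 d_9_0 i_9_9 i_5_9 n_5_0])
  have n_1_9: "p1 \<notin> l9" by (rule B2[OF F_0 F_9 i_9_0 i_1_0 d_9_1 i_9_9 i_5_9 n_5_0])
  have n_3_9: "p3 \<notin> l9" by (rule B2[OF F_0 F_9 i_9_0 i_3_0 d_9_3 i_9_9 i_5_9 n_5_0])
  have n_2_9: "p2 \<notin> l9" by (rule B1[OF F_2 F_9 i_5_2 i_2_2 d_5_2 i_5_9 i_3_2 n_3_9])
  have n_11_9: "p11 \<notin> l9" by (rule B1[OF F_2 F_9 i_5_2 i_11_2 d_5_11 i_5_9 i_3_2 n_3_9])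
  have n_4_9: "p4 \<notin> l9" by (rule B1[OF F_4 F_9 i_5_4 i_4_4 d_5_4 i_5_9 i_0_4 n_0_9])
  have n_7_9: "p7 \<notin> l9" by (rule B1[OF F_4 F_9 i_5_4 i_7_4 d_5_7 i_5_9 i_0_4 n_0_9])
  have n_6_9: "p6 \<notin> l9" by (rule B1[OF F_5 F_9 i_5_5 i_6_5 d_5_6 i_5_9 i_1_5 n_1_9])
  have n_8_9: "p8 \<notin> l9" by (rule B1[OF F_5 F_9 i_5_5 i_8_5 d_5_8 i_5_9 i_1_5 n_1_9])
  obtain q1 where q1: "q1\<in>l9" "q1\<noteq>p9" "q1\<noteq>p5" using exq3[OF c4F[OF F_9]] by blast
  obtain q2 where q2: "q2\<in>l9" "q2\<noteq>p9" "q2\<noteq>p5" "q2\<noteq>q1" using exq3[OF c4F[OF F_9]] by blast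
  have "q1\<in>N" "q2\<in>N" using Vc[OF F_9 q1(1)] Vc[OF F_9 q2(1)] by auto
  hence "(q1=p10 \<or> q1=p12) \<and> (q2=p10 \<or> q2=p12)" using q1 q2 n_0_9 n_1_9 n_2_9 n_3_9 n_4_9 n_6_9 n_7_9 n_8_9 n_11_9 unfolding N_def by auto
  hence i_10_9: "p10 \<in> l9" and i_12_9: "p12 \<in> l9" using q1 q2 by auto
  have n_9_3: "p9 \<notin> l3" by (rule B3[OF F_0 F_3 i_3_0 i_9_0 d_3_9 i_3_3 e_0_3])
  have d_2_0: "p2 \<noteq> p0" by (rule A2[OF n_2_0 i_0_0])
  have d_2_1: "p2 \<noteq> p1" by (rule A2[OF n_2_0 i_1_0])
  have d_2_9: "p2 \<noteq> p9" by (rule A[OF i_2_2 n_9_2])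
  have d_4_0: "p4 \<noteq> p0" by (rule A[OF i_4_1 n_0_1])
  have d_4_3: "p4 \<noteq> p3" by (rule A[OF i_4_1 n_3_1])
  have d_4_9: "p4 \<noteq> p9" by (rule A[OF i_4_1 n_9_1])
  have d_4_1: "p4 \<noteq> p1" by (rule A[OF i_4_3 n_1_3])
  have d_10_0: "p10 \<noteq> p0" by (rule A[OF i_10_1 n_0_1])
  have d_0_10: "p0 \<noteq> p10" by (rule A2[OF n_0_1 i_10_1])
  have d_10_9: "p10 \<noteq> p9" by (rule A[OF i_10_1 n_9_1])
  have d_9_10: "p9 \<noteq> p10" by (rule A2[OF n_9_1 i_10_1])
  have d_10_1: "p10 \<noteq> p1" by (rule A[OF i_10_7 n_1_7])
  have d_10_2: "p10 \<noteq> p2" by (rule A[OF i_10_7 n_2_7])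
  have d_10_4: "p10 \<noteq> p4" by (rule A[OF i_10_7 n_4_7])
  have n_10_3: "p10 \<notin> l3" by (rule B1[OF F_1 F_3 i_4_1 i_10_1 d_4_10 i_4_3 i_1_1 n_1_3])
  have d_12_0: "p12 \<noteq> p0" by (rule A[OF i_12_3 n_0_3])
  have d_0_12: "p0 \<noteq> p12" by (rule A2[OF n_0_3 i_12_3])
  have d_12_1: "p12 \<noteq> p1" by (rule A[OF i_12_3 n_1_3])
  have d_12_2: "p12 \<noteq> p2" by (rule A[OF i_12_3 n_2_3])
  have d_12_9: "p12 \<noteq> p9" by (rule A[OF i_12_3 n_9_3])
  have d_9_12: "p9 \<noteq> p12" by (rule A2[OF n_9_3 i_12_3])
  have d_12_10: "p12 \<noteq> p10" by (rule A[OF i_12_3 n_10_3])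
  have d_10_12: "p10 \<noteq> p12" by (rule A2[OF n_10_3 i_12_3])
  have d_12_3: "p12 \<noteq> p3" by (rule A[OF i_12_12 n_3_12])
  have d_12_4: "p12 \<noteq> p4" by (rule A[OF i_12_12 n_4_12])
  have n_12_2: "p12 \<notin> l2" by (rule B1[OF F_3 F_2 i_3_3 i_12_3 d_3_12 i_3_2 i_4_3 n_4_2])
  have n_12_7: "p12 \<notin> l7" by (rule B1[OF F_3 F_7 i_3_3 i_12_3 d_3_12 i_3_7 i_4_3 n_4_7])
  have d_8_0: "p8 \<noteq> p0" by (rule A[OF i_8_7 n_0_7])
  have d_8_1: "p8 \<noteq> p1" by (rule A[OF i_8_7 n_1_7])
  have d_1_8: "p1 \<noteq> p8" by (rule A2[OF n_1_7 i_8_7])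
  have d_8_2: "p8 \<noteq> p2" by (rule A[OF i_8_7 n_2_7])
  have d_8_4: "p8 \<noteq> p4" by (rule A[OF i_8_7 n_4_7])
  have d_4_8: "p4 \<noteq> p8" by (rule A2[OF n_4_7 i_8_7])
  have d_8_9: "p8 \<noteq> p9" by (rule A[OF i_8_7 n_9_7])
  have d_9_8: "p9 \<noteq> p8" by (rule A2[OF n_9_7 i_8_7])
  have d_8_12: "p8 \<noteq> p12" by (rule A[OF i_8_7 n_12_7])
  have d_12_8: "p12 \<noteq> p8" by (rule A2[OF n_12_7 i_8_7])
  have d_10_8: "p10 \<noteq> p8" by (rule A2[OF n_10_12 i_8_12])
  have n_8_3: "p8 \<notin> l3" by (rule B1[OF F_7 F_3 i_3_7 i_8_7 d_3_8 i_3_3 i_10_7 n_10_3])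
  have d_6_0: "p6 \<noteq> p0" by (rule A[OF i_6_3 n_0_3])
  have d_6_1: "p6 \<noteq> p1" by (rule A[OF i_6_3 n_1_3])
  have d_1_6: "p1 \<noteq> p6" by (rule A2[OF n_1_3 i_6_3])
  have d_2_6: "p2 \<noteq> p6" by (rule A2[OF n_2_3 i_6_3])
  have d_6_8: "p6 \<noteq> p8" by (rule A[OF i_6_3 n_8_3])
  have d_8_6: "p8 \<noteq> p6" by (rule A2[OF n_8_3 i_6_3])
  have d_6_9: "p6 \<noteq> p9" by (rule A[OF i_6_3 n_9_3])
  have d_9_6: "p9 \<noteq> p6" by (rule A2[OF n_9_3 i_6_3])
  have d_6_10: "p6 \<noteq> p10" by (rule A[OF i_6_3 n_10_3])
  have d_10_6: "p10 \<noteq> p6" by (rule A2[OF n_10_3 i_6_3])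
  have d_6_3: "p6 \<noteq> p3" by (rule A[OF i_6_6 n_3_6])
  have d_12_6: "p12 \<noteq> p6" by (rule A2[OF n_12_6 i_6_6])
  have d_7_0: "p7 \<noteq> p0" by (rule A[OF i_7_6 n_0_6])
  have d_0_7: "p0 \<noteq> p7" by (rule A2[OF n_0_6 i_7_6])
  have d_7_1: "p7 \<noteq> p1" by (rule A[OF i_7_6 n_1_6])
  have d_3_7: "p3 \<noteq> p7" by (rule A2[OF n_3_6 i_7_6])
  have d_7_4: "p7 \<noteq> p4" by (rule A[OF i_7_6 n_4_6])
  have d_8_7: "p8 \<noteq> p7" by (rule A2[OF n_8_6 i_7_6])
  have d_10_7: "p10 \<noteq> p7" by (rule A2[OF n_10_6 i_7_6])
  have d_7_12: "p7 \<noteq> p12" by (rule A[OF i_7_6 n_12_6])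
  have d_12_7: "p12 \<noteq> p7" by (rule A2[OF n_12_6 i_7_6])
  have d_7_2: "p7 \<noteq> p2" by (rule A[OF i_7_7 n_2_7])
  have d_7_9: "p7 \<noteq> p9" by (rule A[OF i_7_7 n_9_7])
  have d_5_0: "p5 \<noteq> p0" by (rule A[OF i_5_2 n_0_2])
  have d_5_1: "p5 \<noteq> p1" by (rule A[OF i_5_2 n_1_2])
  have d_6_5: "p6 \<noteq> p5" by (rule A2[OF n_6_2 i_5_2])
  have d_8_5: "p8 \<noteq> p5" by (rule A2[OF n_8_2 i_5_2])
  have d_5_9: "p5 \<noteq> p9" by (rule A[OF i_5_2 n_9_2])
  have d_5_10: "p5 \<noteq> p10" by (rule A[OF i_5_2 n_10_2])
  have d_10_5: "p10 \<noteq> p5" by (rule A2[OF n_10_2 i_5_2])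
  have d_5_12: "p5 \<noteq> p12" by (rule A[OF i_5_2 n_12_2])
  have d_12_5: "p12 \<noteq> p5" by (rule A2[OF n_12_2 i_5_2])
  have d_5_3: "p5 \<noteq> p3" by (rule A[OF i_5_4 n_3_4])
  have d_11_0: "p11 \<noteq> p0" by (rule A[OF i_11_2 n_0_2])
  have d_0_11: "p0 \<noteq> p11" by (rule A2[OF n_0_2 i_11_2])
  have d_11_1: "p11 \<noteq> p1" by (rule A[OF i_11_2 n_1_2])
  have d_1_11: "p1 \<noteq> p11" by (rule A2[OF n_1_2 i_11_2])
  have d_11_4: "p11 \<noteq> p4" by (rule A[OF i_11_2 n_4_2])
  have d_4_11: "p4 \<noteq> p11" by (rule A2[OF n_4_2 i_11_2])
  have d_11_6: "p11 \<noteq> p6" by (rule A[OF i_11_2 n_6_2])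
  have d_6_11: "p6 \<noteq> p11" by (rule A2[OF n_6_2 i_11_2])
  have d_11_7: "p11 \<noteq> p7" by (rule A[OF i_11_2 n_7_2])
  have d_7_11: "p7 \<noteq> p11" by (rule A2[OF n_7_2 i_11_2])
  have d_11_8: "p11 \<noteq> p8" by (rule A[OF i_11_2 n_8_2])
  have d_8_11: "p8 \<noteq> p11" by (rule A2[OF n_8_2 i_11_2])
  have d_11_9: "p11 \<noteq> p9" by (rule A[OF i_11_2 n_9_2])
  have d_9_11: "p9 \<noteq> p11" by (rule A2[OF n_9_2 i_11_2])
  have d_11_10: "p11 \<noteq> p10" by (rule A[OF i_11_2 n_10_2])
  have d_10_11: "p10 \<noteq> p11" by (rule A2[OF n_10_2 i_11_2])
  have d_11_12: "p11 \<noteq> p12" by (rule A[OF i_11_2 n_12_2])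
  have d_12_11: "p12 \<noteq> p11" by (rule A2[OF n_12_2 i_11_2])
  have d_11_2: "p11 \<noteq> p2" by (rule A[OF i_11_10 n_2_10])
  have d_11_3: "p11 \<noteq> p3" by (rule A[OF i_11_10 n_3_10])
  have d_11_5: "p11 \<noteq> p5" by (rule A[OF i_11_10 n_5_10])
  have eq4: "l4 = {p4,p5,p7,p0}" by (rule EQ[OF F_4 i_4_4 i_5_4 i_7_4 i_0_4 d_4_5 d_4_7 d_4_0 d_5_7 d_5_0 d_7_0])
  have eq5: "l5 = {p5,p6,p8,p1}" by (rule EQ[OF F_5 i_5_5 i_6_5 i_8_5 i_1_5 d_5_6 d_5_8 d_5_1 d_6_8 d_6_1 d_8_1])
  have eq6: "l6 = {p6,p7,p9,p2}" by (rule EQ[OF F_6 i_6_6 i_7_6 i_9_6 i_2_6 d_6_7 d_6_9 d_6_2 d_7_9 d_7_2 d_9_2])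
  have eq8: "l8 = {p8,p9,p11,p4}" by (rule EQ[OF F_8 i_8_8 i_9_8 i_11_8 i_4_8 d_8_9 d_8_11 d_8_4 d_9_11 d_9_4 d_11_4])
  have eq9: "l9 = {p9,p10,p12,p5}" by (rule EQ[OF F_9 i_9_9 i_10_9 i_12_9 i_5_9 d_9_10 d_9_12 d_9_5 d_10_12 d_10_5 d_12_5])
  have eq10: "l10 = {p10,p11,p0,p6}" by (rule EQ[OF F_10 i_10_10 i_11_10 i_0_10 i_6_10 d_10_11 d_10_0 d_10_6 d_11_0 d_11_6 d_0_6])
  have eq11: "l11 = {p11,p12,p1,p7}" by (rule EQ[OF F_11 i_11_11 i_12_11 i_1_11 i_7_11 d_11_12 d_11_1 d_11_7 d_12_1 d_12_7 d_1_7])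
  have eq12: "l12 = {p12,p0,p2,p8}" by (rule EQ[OF F_12 i_12_12 i_0_12 i_2_12 i_8_12 d_12_0 d_12_2 d_12_8 d_0_2 d_0_8 d_2_8])
  have FF: "F = {l0,l1,l2,l3,l4,l5,l6,l7,l8,l9,l10,l11,l12}"
  proof
    show "{l0,l1,l2,l3,l4,l5,l6,l7,l8,l9,l10,l11,l12} \<subseteq> F" using F_0 F_1 F_2 F_3 F_4 F_5 F_6 F_7 F_8 F_9 F_10 F_11 F_12 by auto
    show "F \<subseteq> {l0,l1,l2,l3,l4,l5,l6,l7,l8,l9,l10,l11,l12}"
    proof
      fix M assume M: "M\<in>F"
      show "M \<in> {l0,l1,l2,l3,l4,l5,l6,l7,l8,l9,l10,l11,l12}"
      proof (cases "p3\<in>M")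
        case True thus ?thesis using T3[OF M True] by auto
      next
        case False
        obtain z0 where z0: "z0\<in>M" "z0\<in>l0" using MT[OF M F_0] False i_3_0 by metis
        obtain z2 where z2: "z2\<in>M" "z2\<in>l2" using MT[OF M F_2] False i_3_2 by metis
        have z0s: "z0=p0 \<or> z0=p1 \<or> z0=p9" using z0 eq0 False by auto
        have z2s: "z2=p2 \<or> z2=p5 \<or> z2=p11" using z2 eq2 False by auto
        from z0s show ?thesis
        proof (elim disjE)
          assume a: "z0=p0"
          from z2s show ?thesis
          proof (elim disjE)
            assume b: "z2=p2"
            have "M=l12" using R[OF M F_12 _ _ i_0_12 i_2_12 d_0_2] z0 z2 a b by blast
            thus ?thesis by simp
          next
            assume b: "z2=p5"
            have "M=l4" using R[OF M F_4 _ _ i_0_4 i_5_4 d_0_5] z0 z2 a b by blast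
            thus ?thesis by simp
          next
            assume b: "z2=p11"
            have "M=l10" using R[OF M F_10 _ _ i_0_10 i_11_10 d_0_11] z0 z2 a b by blast
            thus ?thesis by simp
          qed
        next
          assume a: "z0=p1"
          from z2s show ?thesis
          proof (elim disjE)
            assume b: "z2=p2"
            have "M=l1" using R[OF M F_1 _ _ i_1_1 i_2_1 d_1_2] z0 z2 a b by blast
            thus ?thesis by simp
          next
            assume b: "z2=p5"
            have "M=l5" using R[OF M F_5 _ _ i_1_5 i_5_5 d_1_5] z0 z2 a b by blast
            thus ?thesis by simp
          next
            assume b: "z2=p11"
            have "M=l11" using R[OF M F_11 _ _ i_1_11 i_11_11 d_1_11] z0 z2 a b by blast
            thus ?thesis by simp
          qed
        next
          assume a: "z0=p9"
          from z2s show ?thesis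
          proof (elim disjE)
            assume b: "z2=p2"
            have "M=l6" using R[OF M F_6 _ _ i_9_6 i_2_6 d_9_2] z0 z2 a b by blast
            thus ?thesis by simp
          next
            assume b: "z2=p5"
            have "M=l9" using R[OF M F_9 _ _ i_9_9 i_5_9 d_9_5] z0 z2 a b by blast
            thus ?thesis by simp
          next
            assume b: "z2=p11"
            have "M=l8" using R[OF M F_8 _ _ i_9_8 i_11_8 d_9_11] z0 z2 a b by blast
            thus ?thesis by simp
          qed
        qed
      qed
    qed
  qed
  define xs where "xs = [p0,p1,p2,p3,p4,p5,p6,p7,p8,p9,p10,p11,p12]"
  have dist: "distinct xs" unfolding xs_def using d_0_1 d_0_2 d_0_3 d_0_4 d_0_5 d_0_6 d_0_7 d_0_8 d_0_9 d_0_10 d_0_11 d_0_12 d_1_0 d_1_2 d_1_3 d_1_4 d_1_5 d_1_6 d_1_7 d_1_8 d_1_9 d_1_10 d_1_11 d_1_12 d_2_0 d_2_1 d_2_3 d_2_4 d_2_5 d_2_6 d_2_7 d_2_8 d_2_9 d_2_10 d_2_11 d_2_12 d_3_0 d_3_1 d_3_2 d_3_4 d_3_5 d_3_6 d_3_7 d_3_8 d_3_9 d_3_10 d_3_11 d_3_12 d_4_0 d_4_1 d_4_2 d_4_3 d_4_5 d_4_6 d_4_7 d_4_8 d_4_9 d_4_10 d_4_11 d_4_12 d_5_0 d_5_1 d_5_2 d_5_3 d_5_4 d_5_6 d_5_7 d_5_8 d_5_9 d_5_10 d_5_11 d_5_12 d_6_0 d_6_1 d_6_2 d_6_3 d_6_4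 d_6_5 d_6_7 d_6_8 d_6_9 d_6_10 d_6_11 d_6_12 d_7_0 d_7_1 d_7_2 d_7_3 d_7_4 d_7_5 d_7_6 d_7_8 d_7_9 d_7_10 d_7_11 d_7_12 d_8_0 d_8_1 d_8_2 d_8_3 d_8_4 d_8_5 d_8_6 d_8_7 d_8_9 d_8_10 d_8_11 d_8_12 d_9_0 d_9_1 d_9_2 d_9_3 d_9_4 d_9_5 d_9_6 d_9_7 d_9_8 d_9_10 d_9_11 d_9_12 d_10_0 d_10_1 d_10_2 d_10_3 d_10_4 d_10_5 d_10_6 d_10_7 d_10_8 d_10_9 d_10_11 d_10_12 d_11_0 d_11_1 d_11_2 d_11_3 d_11_4 d_11_5 d_11_6 d_11_7 d_11_8 d_11_9 d_11_10 d_11_12 d_12_0 d_12_1 d_12_2 d_12_3 d_12_4 d_12_5 d_12_6 d_12_7 d_12_8 d_12_9 d_12_10 d_12_11 by (simp only: distinct.simps list.set insert_iff empty_iff simp_thms de_Morgan_disj)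
  define \<psi> where "\<psi> = (\<lambda>k. xs ! k)"
  define \<phi> where "\<phi> = inv_into {..<13::nat} \<psi>"
  have inj\<psi>: "inj_on \<psi> {..<13}" unfolding \<psi>_def using inj_on_nth[OF dist, of "{..<13}"] unfolding xs_def by simp
  have pk: "\<And>k. k < 13 \<Longrightarrow> \<phi> (\<psi> k) = k" unfolding \<phi>_def using inj\<psi> by simp
  have f0: "\<phi> p0 = 0" using pk[of 0] unfolding \<psi>_def xs_def by simp
  have f1: "\<phi> p1 = 1" using pk[of 1] unfolding \<psi>_def xs_def by simp
  have f2: "\<phi> p2 = 2" using pk[of 2] unfolding \<psi>_def xs_def by simp
  have f3: "\<phi> p3 = 3" using pk[of 3] unfolding \<psi>_def xs_def by simp
  have f4: "\<phi> p4 = 4" using pk[of 4] unfolding \<psi>_def xs_def by simp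
  have f5: "\<phi> p5 = 5" using pk[of 5] unfolding \<psi>_def xs_def by simp
  have f6: "\<phi> p6 = 6" using pk[of 6] unfolding \<psi>_def xs_def by simp
  have f7: "\<phi> p7 = 7" using pk[of 7] unfolding \<psi>_def xs_def by simp
  have f8: "\<phi> p8 = 8" using pk[of 8] unfolding \<psi>_def xs_def by simp
  have f9: "\<phi> p9 = 9" using pk[of 9] unfolding \<psi>_def xs_def by simp
  have f10: "\<phi> p10 = 10" using pk[of 10] unfolding \<psi>_def xs_def by simp
  have f11: "\<phi> p11 = 11" using pk[of 11] unfolding \<psi>_def xs_def by simp
  have f12: "\<phi> p12 = 12" using pk[of 12] unfolding \<psi>_def xs_def by simp
  have UF: "\<Union>F = N" unfolding FF N_def eq0 eq1 eq2 eq3 eq4 eq5 eq6 eq7 eq8 eq9 eq10 eq11 eq12 by auto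
  have h0: "\<psi> 0 = p0" unfolding \<psi>_def xs_def by simp
  have m0: "p0 \<in> \<psi> ` {..<13}" unfolding h0[symmetric] by (rule imageI) simp
  have h1: "\<psi> 1 = p1" unfolding \<psi>_def xs_def by simp
  have m1: "p1 \<in> \<psi> ` {..<13}" unfolding h1[symmetric] by (rule imageI) simp
  have h2: "\<psi> 2 = p2" unfolding \<psi>_def xs_def by simp
  have m2: "p2 \<in> \<psi> ` {..<13}" unfolding h2[symmetric] by (rule imageI) simp
  have h3: "\<psi> 3 = p3" unfolding \<psi>_def xs_def by simp
  have m3: "p3 \<in> \<psi> ` {..<13}" unfolding h3[symmetric] by (rule imageI) simp
  have h4: "\<psi> 4 = p4" unfolding \<psi>_def xs_def by simp
  have m4: "p4 \<in> \<psi> ` {..<13}" unfolding h4[symmetric] by (rule imageI) simp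
  have h5: "\<psi> 5 = p5" unfolding \<psi>_def xs_def by simp
  have m5: "p5 \<in> \<psi> ` {..<13}" unfolding h5[symmetric] by (rule imageI) simp
  have h6: "\<psi> 6 = p6" unfolding \<psi>_def xs_def by simp
  have m6: "p6 \<in> \<psi> ` {..<13}" unfolding h6[symmetric] by (rule imageI) simp
  have h7: "\<psi> 7 = p7" unfolding \<psi>_def xs_def by simp
  have m7: "p7 \<in> \<psi> ` {..<13}" unfolding h7[symmetric] by (rule imageI) simp
  have h8: "\<psi> 8 = p8" unfolding \<psi>_def xs_def by simp
  have m8: "p8 \<in> \<psi> ` {..<13}" unfolding h8[symmetric] by (rule imageI) simp
  have h9: "\<psi> 9 = p9" unfolding \<psi>_def xs_def by simp
  have m9: "p9 \<in> \<psi> ` {..<13}" unfolding h9[symmetric] by (rule imageI) simp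
  have h10: "\<psi> 10 = p10" unfolding \<psi>_def xs_def by simp
  have m10: "p10 \<in> \<psi> ` {..<13}" unfolding h10[symmetric] by (rule imageI) simp
  have h11: "\<psi> 11 = p11" unfolding \<psi>_def xs_def by simp
  have m11: "p11 \<in> \<psi> ` {..<13}" unfolding h11[symmetric] by (rule imageI) simp
  have h12: "\<psi> 12 = p12" unfolding \<psi>_def xs_def by simp
  have m12: "p12 \<in> \<psi> ` {..<13}" unfolding h12[symmetric] by (rule imageI) simp
  have "N \<subseteq> \<psi> ` {..<13}" unfolding N_def using m0 m1 m2 m3 m4 m5 m6 m7 m8 m9 m10 m11 m12 by simp
  hence inj\<phi>: "inj_on \<phi> (\<Union>F)" unfolding UF \<phi>_def by (rule inj_on_inv_into)
  define S where "S = (\<lambda>i::nat. {i, (i+1) mod 13, (i+3) mod 13, (i+9) mod 13})"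
  have L3S: "L3 = S ` {..<13}" unfolding L3_def S_def by auto
  have lt13: "{..<13::nat} = {0,1,2,3,4,5,6,7,8,9,10,11,12}" by (auto; presburger)
  have g0: "\<phi> ` l0 = S 0" unfolding S_def eq0 by (simp add: f0 f1 f3 f9 numeral_2_eq_2)
  have g1: "\<phi> ` l1 = S 1" unfolding S_def eq1 by (simp add: f1 f2 f4 f10 numeral_2_eq_2)
  have g2: "\<phi> ` l2 = S 2" unfolding S_def eq2 by (simp add: f2 f3 f5 f11 numeral_2_eq_2)
  have g3: "\<phi> ` l3 = S 3" unfolding S_def eq3 by (simp add: f3 f4 f6 f12 numeral_2_eq_2)
  have g4: "\<phi> ` l4 = S 4" unfolding S_def eq4 by (simp add: f4 f5 f7 f0 numeral_2_eq_2)
  have g5: "\<phi> ` l5 = S 5" unfolding S_def eq5 by (simp add: f5 f6 f8 f1 numeral_2_eq_2)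
  have g6: "\<phi> ` l6 = S 6" unfolding S_def eq6 by (simp add: f6 f7 f9 f2 numeral_2_eq_2)
  have g7: "\<phi> ` l7 = S 7" unfolding S_def eq7 by (simp add: f7 f8 f10 f3 numeral_2_eq_2)
  have g8: "\<phi> ` l8 = S 8" unfolding S_def eq8 by (simp add: f8 f9 f11 f4 numeral_2_eq_2)
  have g9: "\<phi> ` l9 = S 9" unfolding S_def eq9 by (simp add: f9 f10 f12 f5 numeral_2_eq_2)
  have g10: "\<phi> ` l10 = S 10" unfolding S_def eq10 by (simp add: f10 f11 f0 f6 numeral_2_eq_2)
  have g11: "\<phi> ` l11 = S 11" unfolding S_def eq11 by (simp add: f11 f12 f1 f7 numeral_2_eq_2)
  have g12: "\<phi> ` l12 = S 12" unfolding S_def eq12 by (simp add: f12 f0 f2 f8 numeral_2_eq_2)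
  have "(\<lambda>A. \<phi> ` A) ` F = L3" unfolding FF L3S lt13 by (simp only: image_insert image_empty g0 g1 g2 g3 g4 g5 g6 g7 g8 g9 g10 g11 g12)
  thus ?thesis unfolding isomorphic_def using inj\<phi> by blast
qed

end
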